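(* Consider a downlink system with $M\ge1$ single-antenna access points (APs) $\mathscr{A}=\{1,\dots,M\}$ and $N\ge1$ single-antenna devices $\mathscr{D}=\{1,\dots,N\}$, each device requiring an independent $B$-bit message within a time cycle of duration $T$ over bandwidth $W$. Every AP–device link $(i,j)$ has instantaneous received SNR $g_{ij}=\rho|h_{ij}|^2$ with i.i.d. fades $h_{ij}\sim\mathcal{CN}(0,1)$ constant over the cycle and common average SNR $\rho=P_t/(W\sigma_0)$ ($P_t$ transmit power, $\sigma_0$ noise power spectral density). With perfect channel knowledge at the controller, all $N$ devices are scheduled in a single-hop rate-adaptive phase: the APs jointly transmit to each device $j$, one after another (TDMA), at rate $\mathcal{R}_j=W\log_2\!\big(1+\sum_{i\in\mathscr{A}}g_{ij}\big)$, and the system is in outage if $\sum_{j\in\mathscr{D}} B/\mathcal{R}_j > T$. Then, with $B,T,W,\sigma_0,M,N$ fixed (zero multiplexing gain), the diversity order $d_{\text{single-hop}}(0)=-\lim_{P_t\to\infty}\frac{\log\mathbb{P}_{\mathrm{out}}}{\log P_t}$ equals $M$.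
   Context: $\mathbb{P}_{\mathrm{out}}$ is the system outage probability, i.e. the probability over the fading that at least one device fails to receive its message within the cycle, which here equals $\Pr\big(\sum_{j\in\mathscr{D}} B/\mathcal{R}_j > T\big)$. *)

theory Defs
  imports "HOL-Probability.Probability"
begin

text \<open>Fading model: h i j, for APs i in {1..M} and devices j in {1..N}, are i.i.d.
  circularly-symmetric standard complex Gaussians CN(0,1), i.e. all real and imaginary
  parts are mutually independent real Gaussians with mean 0 and variance 1/2.\<close>

definition iid_CN01_fading ::
  "'w measure \<Rightarrow> (nat \<Rightarrow> nat \<Rightarrow> 'w \<Rightarrow> complex) \<Rightarrow> nat \<Rightarrow> nat \<Rightarrow> bool" where
  "iid_CN01_fading P h M N \<longleftrightarrow>
     prob_space P \<and>
     (\<forall>i\<in>{1..M}. \<forall>j\<in>{1..N}.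
        distributed P lborel (\<lambda>\<omega>. Re (h i j \<omega>)) (\<lambda>x. ennreal (normal_density 0 (sqrt (1/2)) x)) \<and>
        distributed P lborel (\<lambda>\<omega>. Im (h i j \<omega>)) (\<lambda>x. ennreal (normal_density 0 (sqrt (1/2)) x))) \<and>
     prob_space.indep_vars P (\<lambda>_. borel)
        (\<lambda>(i, j, b) \<omega>. if b then Re (h i j \<omega>) else Im (h i j \<omega>))
        ({1..M} \<times> {1..N} \<times> (UNIV :: bool set))"

definition avg_snr :: "real \<Rightarrow> real \<Rightarrow> real \<Rightarrow> real" where
  "avg_snr Pt W sigma0 = Pt / (W * sigma0)"

definition single_hop_rate ::
  "(nat \<Rightarrow> nat \<Rightarrow> 'w \<Rightarrow> complex) \<Rightarrow> nat \<Rightarrow> real \<Rightarrow> real \<Rightarrow> real \<Rightarrow> nat \<Rightarrow> 'w \<Rightarrow> real" where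
  "single_hop_rate h M W sigma0 Pt j \<omega> =
     W * log 2 (1 + (\<Sum>i\<in>{1..M}. avg_snr Pt W sigma0 * (cmod (h i j \<omega>))\<^sup>2))"

definition single_hop_outage ::
  "'w measure \<Rightarrow> (nat \<Rightarrow> nat \<Rightarrow> 'w \<Rightarrow> complex) \<Rightarrow> nat \<Rightarrow> nat \<Rightarrow> real \<Rightarrow> real \<Rightarrow> real \<Rightarrow> real \<Rightarrow> real \<Rightarrow> real" where
  "single_hop_outage P h M N B T W sigma0 Pt =
     measure P {\<omega> \<in> space P. (\<Sum>j\<in>{1..N}. B / single_hop_rate h M W sigma0 Pt j \<omega>) > T}"

end

theory Submission
  imports Defs
begin


abbreviation nd where "nd \<equiv> normal_density 0 (sqrt (1/2))"

lemma nd_eq: "nd x = exp (- x\<^sup>2) / sqrt pi"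
  by (simp add: normal_density_def)

lemma dist_emeasure:
  assumes "prob_space P" "distributed P lborel X (\<lambda>x. ennreal (nd x))" "A \<in> sets borel"
  shows "emeasure P (X -` A \<inter> space P) = (\<integral>\<^sup>+x. ennreal (nd x) * indicator A x \<partial>lborel)"
proof -
  have m: "X \<in> measurable P lborel" using distributed_measurable[OF assms(2)] .
  have "emeasure P (X -` A \<inter> space P) = emeasure (distr P lborel X) A"
    using m assms(3) by (simp add: emeasure_distr)
  also have "\<dots> = emeasure (density lborel (\<lambda>x. ennreal (nd x))) A"
    using distributed_distr_eq_density[OF assms(2)] by simp
  also have "\<dots> = (\<integral>\<^sup>+x. ennreal (nd x) * indicator A x \<partial>lborel)"
    using assms(3) by (simp add: emeasure_density)
  finally show ?thesis .
qed

lemma upper_int: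
  assumes "a \<ge> 0"
  shows "(\<integral>\<^sup>+x. ennreal (nd x) * indicator {-a<..<a} x \<partial>lborel) \<le> ennreal (2 * a / sqrt pi)"
proof -
  have "(\<integral>\<^sup>+x. ennreal (nd x) * indicator {-a<..<a} x \<partial>lborel) \<le> (\<integral>\<^sup>+x. ennreal (1 / sqrt pi) * indicator {-a<..<a} x \<partial>lborel)"
  proof (rule nn_integral_mono)
    fix x
    have "nd x \<le> 1 / sqrt pi" unfolding nd_eq by (simp add: divide_right_mono)
    then show "ennreal (nd x) * indicator {-a<..<a} x \<le> ennreal (1 / sqrt pi) * indicator {-a<..<a} x"
      by (auto simp: indicator_def)
  qed
  also have "\<dots> = ennreal (1 / sqrt pi) * emeasure lborel {-a<..<a}"
    by (simp add: nn_integral_cmult_indicator)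
  also have "\<dots> = ennreal (2 * a / sqrt pi)" using assms
    by (simp add: ennreal_mult'[symmetric])
  finally show ?thesis .
qed

lemma lower_int:
  assumes "a > 0" "a \<le> 1"
  shows "ennreal (exp (-1) / sqrt pi * (a/2)) \<le> (\<integral>\<^sup>+x. ennreal (nd x) * indicator {a/2<..<a} x \<partial>lborel)"
proof -
  have "(\<integral>\<^sup>+x. ennreal (exp (-1) / sqrt pi) * indicator {a/2<..<a} x \<partial>lborel) \<le> (\<integral>\<^sup>+x. ennreal (nd x) * indicator {a/2<..<a} x \<partial>lborel)"
  proof (rule nn_integral_mono)
    fix x
    show "ennreal (exp (-1) / sqrt pi) * indicator {a/2<..<a} x \<le> ennreal (nd x) * indicator {a/2<..<a} x"
    proof (cases "x \<in> {a/2<..<a}")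
      case True
      then have "x\<^sup>2 \<le> 1" using assms by (intro power_le_one) auto
      then have "exp (-1) \<le> exp (- x\<^sup>2)" by simp
      then have "exp (-1) / sqrt pi \<le> nd x" unfolding nd_eq by (simp add: divide_right_mono)
      then show ?thesis using True by simp
    qed simp
  qed
  moreover have "(\<integral>\<^sup>+x. ennreal (exp (-1) / sqrt pi) * indicator {a/2<..<a} x \<partial>lborel) = ennreal (exp (-1) / sqrt pi * (a/2))"
    using assms by (simp add: nn_integral_cmult_indicator ennreal_mult'[symmetric])
  ultimately show ?thesis by simp
qed


definition XX :: "(nat \<Rightarrow> nat \<Rightarrow> 'w \<Rightarrow> complex) \<Rightarrow> nat \<times> nat \<times> bool \<Rightarrow> 'w \<Rightarrow> real" where
  "XX h = (\<lambda>(i, j, b) \<omega>. if b then Re (h i j \<omega>) else Im (h i j \<omega>))"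

lemma XX_simp: "XX h (i, j, b) \<omega> = (if b then Re (h i j \<omega>) else Im (h i j \<omega>))"
  by (simp add: XX_def)

lemma single_factor:
  assumes "iid_CN01_fading P h M N" "k \<in> {1..M} \<times> {1..N} \<times> UNIV" "A \<in> sets borel"
  shows "ennreal (measure P (XX h k -` A \<inter> space P)) = (\<integral>\<^sup>+x. ennreal (nd x) * indicator A x \<partial>lborel)"
proof -
  obtain i j b where k: "k = (i, j, b)" by (cases k) auto
  have ps: "prob_space P" using assms(1) by (simp add: iid_CN01_fading_def)
  have d: "distributed P lborel (XX h k) (\<lambda>x. ennreal (nd x))"
  proof -
    have ij: "i \<in> {1..M}" "j \<in> {1..N}" using assms(2) k by auto
    have "distributed P lborel (\<lambda>\<omega>. Re (h i j \<omega>)) (\<lambda>x. ennreal (nd x)) \<and>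
        distributed P lborel (\<lambda>\<omega>. Im (h i j \<omega>)) (\<lambda>x. ennreal (nd x))"
      using assms(1) ij unfolding iid_CN01_fading_def by blast
    moreover have "XX h k = (if b then (\<lambda>\<omega>. Re (h i j \<omega>)) else (\<lambda>\<omega>. Im (h i j \<omega>)))"
      by (auto simp: XX_def k)
    ultimately show ?thesis by simp
  qed
  have "ennreal (measure P (XX h k -` A \<inter> space P)) = emeasure P (XX h k -` A \<inter> space P)"
    using ps by (simp add: prob_space_def finite_measure.emeasure_eq_measure)
  also have "\<dots> = (\<integral>\<^sup>+x. ennreal (nd x) * indicator A x \<partial>lborel)"
    by (rule dist_emeasure[OF ps d assms(3)])
  finally show ?thesis .
qed

lemma event_eq:
  assumes "M \<ge> (1::nat)"
  shows "(\<Inter>k\<in>{1..M} \<times> {j} \<times> UNIV. XX h k -` A \<inter> space P) = {\<omega> \<in> space P. \<forall>i\<in>{1..M}. \<forall>b. XX h (i, j, b) \<omega> \<in> A}"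
  proof (intro equalityI subsetI)
    fix \<omega> assume a: "\<omega> \<in> (\<Inter>k\<in>{1..M} \<times> {j} \<times> UNIV. XX h k -` A \<inter> space P)"
    have "(1, j, True) \<in> {1..M} \<times> {j} \<times> (UNIV :: bool set)" using assms(1) by auto
    then have "\<omega> \<in> space P" using a by blast
    moreover have "\<forall>i\<in>{1..M}. \<forall>b. XX h (i, j, b) \<omega> \<in> A"
    proof (intro ballI allI)
      fix i b assume "i \<in> {1..M}"
      then have "(i, j, b) \<in> {1..M} \<times> {j} \<times> (UNIV :: bool set)" by auto
      then show "XX h (i, j, b) \<omega> \<in> A" using a by blast
    qed
    ultimately show "\<omega> \<in> {\<omega> \<in> space P. \<forall>i\<in>{1..M}. \<forall>b. XX h (i, j, b) \<omega> \<in> A}" by blast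
  next
    fix \<omega> assume a: "\<omega> \<in> {\<omega> \<in> space P. \<forall>i\<in>{1..M}. \<forall>b. XX h (i, j, b) \<omega> \<in> A}"
    show "\<omega> \<in> (\<Inter>k\<in>{1..M} \<times> {j} \<times> UNIV. XX h k -` A \<inter> space P)"
    proof
      fix k assume "k \<in> {1..M} \<times> {j} \<times> (UNIV :: bool set)"
      then obtain i b where "k = (i, j, b)" "i \<in> {1..M}" by auto
      then show "\<omega> \<in> XX h k -` A \<inter> space P" using a by auto
    qed
  qed

lemma prod_event:
  assumes "iid_CN01_fading P h M N" "j \<in> {1..N}" "M \<ge> 1" "A \<in> sets borel"
  shows "measure P {\<omega> \<in> space P. \<forall>i\<in>{1..M}. \<forall>b. XX h (i, j, b) \<omega> \<in> A}
     = (\<Prod>k\<in>{1..M} \<times> {j} \<times> UNIV. measure P (XX h k -` A \<inter> space P))"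
proof -
  have ps: "prob_space P" using assms(1) by (simp add: iid_CN01_fading_def)
  have iv: "prob_space.indep_vars P (\<lambda>_. borel) (XX h) ({1..M} \<times> {1..N} \<times> (UNIV :: bool set))"
    using assms(1) by (simp add: iid_CN01_fading_def XX_def)
  have ind: "prob_space.indep_sets P (\<lambda>k. {XX h k -` A \<inter> space P | A. A \<in> sets borel}) ({1..M} \<times> {1..N} \<times> (UNIV :: bool set))"
    using iv unfolding prob_space.indep_vars_def2[OF ps] by (rule conjunct2)
  have J: "{1..M} \<times> {j} \<times> (UNIV :: bool set) \<subseteq> {1..M} \<times> {1..N} \<times> UNIV" "{1..M} \<times> {j} \<times> (UNIV :: bool set) \<noteq> {}"
    "finite ({1..M} \<times> {j} \<times> (UNIV :: bool set))"
    using assms(2,3) by auto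
  have "measure P (\<Inter>k\<in>{1..M} \<times> {j} \<times> UNIV. XX h k -` A \<inter> space P) = (\<Prod>k\<in>{1..M} \<times> {j} \<times> UNIV. measure P (XX h k -` A \<inter> space P))"
    by (rule prob_space.indep_setsD[OF ps ind J]) (use assms(4) in blast)
  moreover have "(\<Inter>k\<in>{1..M} \<times> {j} \<times> UNIV. XX h k -` A \<inter> space P) = {\<omega> \<in> space P. \<forall>i\<in>{1..M}. \<forall>b. XX h (i, j, b) \<omega> \<in> A}"
    by (rule event_eq[OF assms(3)])
  ultimately show ?thesis by simp
qed


lemma event_sets:
  assumes "iid_CN01_fading P h M N" "j \<in> {1..N}" "M \<ge> 1" "A \<in> sets borel"
  shows "{\<omega> \<in> space P. \<forall>i\<in>{1..M}. \<forall>b. XX h (i, j, b) \<omega> \<in> A} \<in> sets P"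
proof -
  have ps: "prob_space P" using assms(1) by (simp add: iid_CN01_fading_def)
  have iv: "prob_space.indep_vars P (\<lambda>_. borel) (XX h) ({1..M} \<times> {1..N} \<times> (UNIV :: bool set))"
    using assms(1) by (simp add: iid_CN01_fading_def XX_def)
  have rv: "\<forall>k\<in>{1..M} \<times> {1..N} \<times> (UNIV :: bool set). XX h k \<in> borel_measurable P"
    using iv unfolding prob_space.indep_vars_def2[OF ps] by (rule conjunct1)
  have "(\<Inter>k\<in>{1..M} \<times> {j} \<times> UNIV. XX h k -` A \<inter> space P) \<in> sets P"
  proof (rule sets.finite_INT)
    show "finite ({1..M} \<times> {j} \<times> (UNIV :: bool set))" by simp
    show "{1..M} \<times> {j} \<times> (UNIV :: bool set) \<noteq> {}" using assms(3) by auto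
    fix k assume "k \<in> {1..M} \<times> {j} \<times> (UNIV :: bool set)"
    then have "k \<in> {1..M} \<times> {1..N} \<times> (UNIV :: bool set)" using assms(2) by auto
    then have "XX h k \<in> borel_measurable P" using rv by blast
    then show "XX h k -` A \<inter> space P \<in> sets P" using assms(4) by (rule measurable_sets)
  qed
  then show ?thesis unfolding event_eq[OF assms(3)] .
qed

lemma squeeze:
  fixes p :: "real \<Rightarrow> real" and Ca Cb :: real and M :: nat
  assumes "Ca > 0" "eventually (\<lambda>x. Ca / x^M \<le> p x \<and> p x \<le> Cb / x^M) at_top"
  shows "((\<lambda>x. - ln (p x) / ln x) \<longlongrightarrow> real M) at_top"
proof (rule tendsto_sandwich)
  have ev: "eventually (\<lambda>x. x > 1 \<and> Ca / x^M \<le> p x \<and> p x \<le> Cb / x^M) at_top"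
    using assms(2) eventually_gt_at_top[of 1] by eventually_elim auto
  show "eventually (\<lambda>x. real M - ln Cb / ln x \<le> - ln (p x) / ln x) at_top"
    using ev
  proof eventually_elim
    case (elim x)
    then have x: "x > 1" "Ca / x^M \<le> p x" "p x \<le> Cb / x^M" by auto
    have pos: "0 < Ca / x^M" using x(1) assms(1) by simp
    then have pp: "p x > 0" using x by linarith
    have L: "ln (p x) \<le> ln (Cb / x^M)" using pp x(3) by simp
    have "Cb / x^M > 0" using pos x by linarith
    then have "Cb > 0" using x(1) by (simp add: zero_less_divide_iff)
    then have "ln (Cb / x^M) = ln Cb - real M * ln x" using x(1) by (simp add: ln_div ln_realpow)
    with L have "real M * ln x - ln Cb \<le> - ln (p x)" by simp
    moreover have lx: "ln x > 0" using x(1) by simp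
    ultimately have "(real M * ln x - ln Cb) / ln x \<le> - ln (p x) / ln x"
      by (intro divide_right_mono) auto
    then show ?case using lx by (simp add: diff_divide_distrib)
  qed
  show "eventually (\<lambda>x. - ln (p x) / ln x \<le> real M - ln Ca / ln x) at_top"
    using ev
  proof eventually_elim
    case (elim x)
    then have x: "x > 1" "Ca / x^M \<le> p x" "p x \<le> Cb / x^M" by auto
    have pos: "0 < Ca / x^M" using x(1) assms(1) by simp
    have "ln (Ca / x^M) \<le> ln (p x)" using pos x(2) by simp
    moreover have "ln (Ca / x^M) = ln Ca - real M * ln x" using pos x assms(1) by (simp add: ln_div ln_realpow)
    moreover have "ln x > 0" using x(1) by simp
    ultimately show ?case by (simp add: field_simps)
  qed
  have l: "((\<lambda>x. C / ln x) \<longlongrightarrow> 0) at_top" for C :: real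
    by (rule tendsto_divide_0[OF tendsto_const]) (rule filterlim_at_top_imp_at_infinity[OF ln_at_top])
  show "((\<lambda>x. real M - ln Cb / ln x) \<longlongrightarrow> real M) at_top"
    using tendsto_diff[OF tendsto_const l] by simp
  show "((\<lambda>x. real M - ln Ca / ln x) \<longlongrightarrow> real M) at_top"
    using tendsto_diff[OF tendsto_const l] by simp
qed


lemma rate_eq: "single_hop_rate h M W sigma0 Pt j \<omega> =
   W * log 2 (1 + avg_snr Pt W sigma0 * (\<Sum>i\<in>{1..M}. (Re (h i j \<omega>))\<^sup>2 + (Im (h i j \<omega>))\<^sup>2))"
  by (simp add: single_hop_rate_def sum_distrib_left cmod_power2)

lemma rate_nonneg:
  assumes "W > 0" "Pt > 0" "sigma0 > 0"
  shows "single_hop_rate h M W sigma0 Pt j \<omega> \<ge> 0"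
proof -
  have "avg_snr Pt W sigma0 > 0" using assms by (simp add: avg_snr_def)
  moreover have "(\<Sum>i\<in>{1..M}. (Re (h i j \<omega>))\<^sup>2 + (Im (h i j \<omega>))\<^sup>2) \<ge> 0"
    by (intro sum_nonneg) auto
  ultimately have "1 \<le> 1 + avg_snr Pt W sigma0 * (\<Sum>i\<in>{1..M}. (Re (h i j \<omega>))\<^sup>2 + (Im (h i j \<omega>))\<^sup>2)"
    by simp
  then show ?thesis unfolding rate_eq using assms(1) by simp
qed

lemma outage_sets:
  assumes "iid_CN01_fading P h M N"
  shows "{\<omega> \<in> space P. (\<Sum>j\<in>{1..N}. B / single_hop_rate h M W sigma0 Pt j \<omega>) > T} \<in> sets P"
proof -
  have ps: "prob_space P" using assms(1) by (simp add: iid_CN01_fading_def)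
  have iv: "prob_space.indep_vars P (\<lambda>_. borel) (XX h) ({1..M} \<times> {1..N} \<times> (UNIV :: bool set))"
    using assms(1) by (simp add: iid_CN01_fading_def XX_def)
  have rv: "\<forall>k\<in>{1..M} \<times> {1..N} \<times> (UNIV :: bool set). XX h k \<in> borel_measurable P"
    using iv unfolding prob_space.indep_vars_def2[OF ps] by (rule conjunct1)
  have re: "(\<lambda>\<omega>. Re (h i j \<omega>)) \<in> borel_measurable P" and im: "(\<lambda>\<omega>. Im (h i j \<omega>)) \<in> borel_measurable P"
    if "i \<in> {1..M}" "j \<in> {1..N}" for i j
  proof -
    have "(i, j, True) \<in> {1..M} \<times> {1..N} \<times> (UNIV :: bool set)" "(i, j, False) \<in> {1..M} \<times> {1..N} \<times> (UNIV :: bool set)"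
      using that by auto
    then have "XX h (i, j, True) \<in> borel_measurable P" "XX h (i, j, False) \<in> borel_measurable P"
      using rv by blast+
    moreover have "XX h (i, j, True) = (\<lambda>\<omega>. Re (h i j \<omega>))" "XX h (i, j, False) = (\<lambda>\<omega>. Im (h i j \<omega>))"
      by (auto simp: XX_def)
    ultimately show "(\<lambda>\<omega>. Re (h i j \<omega>)) \<in> borel_measurable P" "(\<lambda>\<omega>. Im (h i j \<omega>)) \<in> borel_measurable P"
      by simp_all
  qed
  have S: "(\<lambda>\<omega>. \<Sum>i\<in>{1..M}. (Re (h i j \<omega>))\<^sup>2 + (Im (h i j \<omega>))\<^sup>2) \<in> borel_measurable P"
    if "j \<in> {1..N}" for j
    using that by (intro borel_measurable_sum borel_measurable_add borel_measurable_power re im)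
  have "(\<lambda>\<omega>. \<Sum>j\<in>{1..N}. B / single_hop_rate h M W sigma0 Pt j \<omega>) \<in> borel_measurable P"
    unfolding rate_eq
    by (intro borel_measurable_sum borel_measurable_divide borel_measurable_times borel_measurable_log
      borel_measurable_add borel_measurable_const S)
  then show ?thesis by measurable
qed


lemma lower_bound:
  assumes M1: "M \<ge> 1" and N1: "N \<ge> 1" and pos: "B > 0" "T > 0" "W > 0" "sigma0 > 0"
    and iid: "iid_CN01_fading P h M N" and Pt: "Pt > 0"
    and c_def: "c = 2 powr (B / (T * W)) - 1" and cle: "c \<le> 2 * real M * avg_snr Pt W sigma0"
  shows "(exp (-1)^2 / pi * c / (8 * real M * avg_snr Pt W sigma0))^M \<le> single_hop_outage P h M N B T W sigma0 Pt"
proof -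
  define \<rho> where "\<rho> = avg_snr Pt W sigma0"
  have ps: "prob_space P" using iid by (simp add: iid_CN01_fading_def)
  have fm: "finite_measure P" using ps by (simp add: prob_space_def)
  have rho: "\<rho> > 0" using pos Pt by (simp add: \<rho>_def avg_snr_def)
  have "1 < (2::real) powr (B / (T * W))" using pos by (intro gr_one_powr) auto
  then have c: "c > 0" using c_def by simp
  define a where "a = sqrt (c / (2 * real M * \<rho>))"
  have frac: "c / (2 * real M * \<rho>) > 0" "c / (2 * real M * \<rho>) \<le> 1"
    using c rho M1 cle by (auto simp: \<rho>_def)
  have a: "a > 0" "a \<le> 1" "a^2 = c / (2 * real M * \<rho>)"
    using frac by (auto simp: a_def)
  define E where "E = {\<omega> \<in> space P. \<forall>i\<in>{1..M}. \<forall>b. XX h (i, 1, b) \<omega> \<in> {a/2<..<a}}"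
  define l where "l = exp (-1) / sqrt pi * (a/2)"
  define Out where "Out = {\<omega> \<in> space P. (\<Sum>j\<in>{1..N}. B / single_hop_rate h M W sigma0 Pt j \<omega>) > T}"
  have one: "(1::nat) \<in> {1..N}" using N1 by simp
  have Osets: "Out \<in> sets P" unfolding Out_def by (rule outage_sets[OF iid])
  have sub: "E \<subseteq> Out"
  proof
    fix \<omega> assume "\<omega> \<in> E"
    then have sp: "\<omega> \<in> space P" and X: "\<forall>i\<in>{1..M}. \<forall>b. XX h (i, 1, b) \<omega> \<in> {a/2<..<a}"
      unfolding E_def by auto
    have re: "a/2 < Re (h i 1 \<omega>) \<and> Re (h i 1 \<omega>) < a" and im: "a/2 < Im (h i 1 \<omega>) \<and> Im (h i 1 \<omega>) < a"
      if "i \<in> {1..M}" for i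
    proof -
      have "XX h (i, 1, True) \<omega> \<in> {a/2<..<a}" "XX h (i, 1, False) \<omega> \<in> {a/2<..<a}"
        using X that by blast+
      then show "a/2 < Re (h i 1 \<omega>) \<and> Re (h i 1 \<omega>) < a" "a/2 < Im (h i 1 \<omega>) \<and> Im (h i 1 \<omega>) < a"
        by (simp_all add: XX_simp)
    qed
    have term_lt: "(Re (h i 1 \<omega>))\<^sup>2 + (Im (h i 1 \<omega>))\<^sup>2 < 2 * a^2" if "i \<in> {1..M}" for i
    proof -
      have "(Re (h i 1 \<omega>))\<^sup>2 < a^2" using re[OF that] a by (intro power_strict_mono) auto
      moreover have "(Im (h i 1 \<omega>))\<^sup>2 < a^2" using im[OF that] a by (intro power_strict_mono) auto
      ultimately show ?thesis by simp
    qed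
    define S where "S = (\<Sum>i\<in>{1..M}. (Re (h i 1 \<omega>))\<^sup>2 + (Im (h i 1 \<omega>))\<^sup>2)"
    have "S < (\<Sum>i\<in>{1..M}. 2 * a^2)" unfolding S_def
      using M1 term_lt by (intro sum_strict_mono) auto
    then have Slt: "S < real M * 2 * a^2" by simp
    have "(Re (h 1 1 \<omega>))\<^sup>2 + (Im (h 1 1 \<omega>))\<^sup>2 \<le> S" unfolding S_def
      using M1 by (intro member_le_sum) auto
    moreover have "(Re (h 1 1 \<omega>))\<^sup>2 > 0" using re[of 1] M1 a by auto
    ultimately have Spos: "S > 0" by (smt (verit) zero_le_power2)
    have "\<rho> * S < \<rho> * (real M * 2 * a^2)" using Slt rho by simp
    also have "\<dots> = c" using a(3) rho M1 by (simp add: field_simps)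
    finally have rSc: "\<rho> * S < c" .
    have rS: "\<rho> * S > 0" using rho Spos by simp
    have "log 2 (1 + \<rho> * S) < log 2 (1 + c)" using rSc rS c by simp
    also have "\<dots> = B / (T * W)" using c_def by simp
    finally have L1: "log 2 (1 + \<rho> * S) < B / (T * W)" .
    have L0: "log 2 (1 + \<rho> * S) > 0" using rS by simp
    define R where "R = single_hop_rate h M W sigma0 Pt 1 \<omega>"
    have R: "R = W * log 2 (1 + \<rho> * S)" unfolding R_def rate_eq S_def \<rho>_def ..
    have Rpos: "R > 0" using R L0 pos by simp
    have "R < W * (B / (T * W))" unfolding R by (rule mult_strict_left_mono[OF L1 pos(3)])
    also have "\<dots> = B / T" using pos by simp
    finally have "R * T < B" using pos by (simp add: pos_less_divide_eq)
    then have BR: "T < B / R" using Rpos by (simp add: pos_less_divide_eq mult.commute)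
    have "B / R \<le> (\<Sum>j\<in>{1..N}. B / single_hop_rate h M W sigma0 Pt j \<omega>)"
      unfolding R_def using one
      by (intro member_le_sum) (auto intro!: divide_nonneg_nonneg rate_nonneg pos Pt less_imp_le[OF pos(1)])
    then show "\<omega> \<in> Out" using BR sp unfolding Out_def by simp
  qed
  have Esets: "E \<in> sets P" unfolding E_def by (rule event_sets[OF iid one M1]) simp
  have fac: "l \<le> measure P (XX h k -` {a/2<..<a} \<inter> space P)" if "k \<in> {1..M} \<times> {1} \<times> UNIV" for k
  proof -
    have k: "k \<in> {1..M} \<times> {1..N} \<times> UNIV" using that one by auto
    have "ennreal l \<le> (\<integral>\<^sup>+x. ennreal (nd x) * indicator {a/2<..<a} x \<partial>lborel)"
      unfolding l_def by (rule lower_int[OF a(1,2)])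
    also have "\<dots> = ennreal (measure P (XX h k -` {a/2<..<a} \<inter> space P))"
      by (rule single_factor[OF iid k, symmetric]) simp
    finally show ?thesis by (simp add: ennreal_le_iff)
  qed
  have l0: "l \<ge> 0" using a by (simp add: l_def)
  have "(\<Prod>k\<in>{1..M} \<times> {1::nat} \<times> (UNIV :: bool set). l) \<le> (\<Prod>k\<in>{1..M} \<times> {1} \<times> UNIV. measure P (XX h k -` {a/2<..<a} \<inter> space P))"
    using fac l0 by (intro prod_mono) auto
  also have "\<dots> = measure P E" unfolding E_def by (rule prod_event[OF iid one M1, symmetric]) simp
  also have "\<dots> \<le> measure P Out" using sub Osets by (rule finite_measure.finite_measure_mono[OF fm])
  finally have "l ^ (2 * M) \<le> measure P Out" by (simp add: mult.commute)
  moreover have "l ^ (2 * M) = (exp (-1)^2 / pi * c / (8 * real M * \<rho>))^M"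
  proof -
    have "l^2 = exp (-1)^2 / pi * c / (8 * real M * \<rho>)"
      unfolding l_def using a(3) by (simp add: power_mult_distrib power_divide field_simps)
    then show ?thesis by (simp add: power_mult)
  qed
  ultimately show ?thesis unfolding single_hop_outage_def Out_def \<rho>_def by simp
qed


lemma upper_bound:
  assumes M1: "M \<ge> 1" and N1: "N \<ge> 1" and pos: "B > 0" "T > 0" "W > 0" "sigma0 > 0"
    and iid: "iid_CN01_fading P h M N" and Pt: "Pt > 0"
    and c_def: "c = 2 powr (real N * B / (T * W)) - 1"
  shows "single_hop_outage P h M N B T W sigma0 Pt \<le> real N * (4 * c / (pi * avg_snr Pt W sigma0))^M"
proof -
  define \<rho> where "\<rho> = avg_snr Pt W sigma0"
  have ps: "prob_space P" using iid by (simp add: iid_CN01_fading_def)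
  have fm: "finite_measure P" using ps by (simp add: prob_space_def)
  have rho: "\<rho> > 0" using pos Pt by (simp add: \<rho>_def avg_snr_def)
  have "1 < (2::real) powr (real N * B / (T * W))" using pos N1 by (intro gr_one_powr) auto
  then have c: "c > 0" using c_def by simp
  define a where "a = sqrt (c / \<rho>)"
  have a: "a > 0" "a^2 = c / \<rho>"
    using c rho by (auto simp: a_def)
  define E where "E j = {\<omega> \<in> space P. \<forall>i\<in>{1..M}. \<forall>b. XX h (i, j, b) \<omega> \<in> {-a<..<a}}" for j
  define u where "u = 2 * a / sqrt pi"
  define Out where "Out = {\<omega> \<in> space P. (\<Sum>j\<in>{1..N}. B / single_hop_rate h M W sigma0 Pt j \<omega>) > T}"
  have sub: "Out \<subseteq> (\<Union>j\<in>{1..N}. E j)"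
  proof
    fix \<omega> assume "\<omega> \<in> Out"
    then have sp: "\<omega> \<in> space P" and gt: "T < (\<Sum>j\<in>{1..N}. B / single_hop_rate h M W sigma0 Pt j \<omega>)"
      unfolding Out_def by auto
    show "\<omega> \<in> (\<Union>j\<in>{1..N}. E j)"
    proof (rule ccontr)
      assume nE: "\<omega> \<notin> (\<Union>j\<in>{1..N}. E j)"
      have each: "B / single_hop_rate h M W sigma0 Pt j \<omega> \<le> T / real N" if j: "j \<in> {1..N}" for j
      proof -
        have "\<omega> \<notin> E j" using nE j by blast
        then obtain i b where i: "i \<in> {1..M}" and nx: "XX h (i, j, b) \<omega> \<notin> {-a<..<a}"
          using sp unfolding E_def by blast
        have "a \<le> \<bar>XX h (i, j, b) \<omega>\<bar>" using nx by auto
        then have "a^2 \<le> \<bar>XX h (i, j, b) \<omega>\<bar>^2" using a by (intro power_mono) auto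
        also have "\<dots> \<le> (Re (h i j \<omega>))\<^sup>2 + (Im (h i j \<omega>))\<^sup>2" by (cases b) (simp_all add: XX_simp)
        also have "\<dots> \<le> (\<Sum>i\<in>{1..M}. (Re (h i j \<omega>))\<^sup>2 + (Im (h i j \<omega>))\<^sup>2)"
          using i by (intro member_le_sum) auto
        finally have aS: "a^2 \<le> (\<Sum>i\<in>{1..M}. (Re (h i j \<omega>))\<^sup>2 + (Im (h i j \<omega>))\<^sup>2)" .
        define S where "S = (\<Sum>i\<in>{1..M}. (Re (h i j \<omega>))\<^sup>2 + (Im (h i j \<omega>))\<^sup>2)"
        have "c \<le> \<rho> * S" using aS a rho unfolding S_def by (simp add: field_simps)
        then have "log 2 (1 + c) \<le> log 2 (1 + \<rho> * S)" using c by simp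
        moreover have "log 2 (1 + c) = real N * B / (T * W)" using c_def by simp
        ultimately have L: "real N * B / (T * W) \<le> log 2 (1 + \<rho> * S)" by simp
        define R where "R = single_hop_rate h M W sigma0 Pt j \<omega>"
        have R: "R = W * log 2 (1 + \<rho> * S)" unfolding R_def rate_eq S_def \<rho>_def ..
        have "W * (real N * B / (T * W)) \<le> R" unfolding R by (rule mult_left_mono[OF L]) (use pos in simp)
        then have NR: "real N * B / T \<le> R" using pos by simp
        have NBpos: "real N * B / T > 0" using pos N1 by simp
        have "B / R \<le> B / (real N * B / T)"
        proof (rule divide_left_mono)
          show "real N * B / T \<le> R" by (rule NR)
          show "0 \<le> B" using pos by simp
          have "R > 0" using NR NBpos by linarith
          then show "0 < R * (real N * B / T)" using NBpos by (rule mult_pos_pos)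
        qed
        also have "\<dots> = T / real N" using pos N1 by simp
        finally show ?thesis unfolding R_def .
      qed
      have "(\<Sum>j\<in>{1..N}. B / single_hop_rate h M W sigma0 Pt j \<omega>) \<le> real (card {1..N}) * (T / real N)"
        using each by (rule sum_bounded_above)
      also have "\<dots> = T" using N1 by simp
      finally show False using gt by simp
    qed
  qed
  have Esets: "E j \<in> sets P" if "j \<in> {1..N}" for j
    unfolding E_def by (rule event_sets[OF iid that M1]) simp
  have u0: "u \<ge> 0" using a by (simp add: u_def)
  have Ej: "measure P (E j) \<le> u ^ (2 * M)" if j: "j \<in> {1..N}" for j
  proof -
    have fac: "measure P (XX h k -` {-a<..<a} \<inter> space P) \<le> u" if "k \<in> {1..M} \<times> {j} \<times> UNIV" for k
    proof -
      have k: "k \<in> {1..M} \<times> {1..N} \<times> UNIV" using that j by auto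
      have "ennreal (measure P (XX h k -` {-a<..<a} \<inter> space P)) = (\<integral>\<^sup>+x. ennreal (nd x) * indicator {-a<..<a} x \<partial>lborel)"
        by (rule single_factor[OF iid k]) simp
      also have "\<dots> \<le> ennreal u"
        unfolding u_def using upper_int[of a] a by simp
      finally show ?thesis using u0 by (simp add: ennreal_le_iff)
    qed
    have "measure P (E j) = (\<Prod>k\<in>{1..M} \<times> {j} \<times> UNIV. measure P (XX h k -` {-a<..<a} \<inter> space P))"
      unfolding E_def by (rule prod_event[OF iid j M1]) simp
    also have "\<dots> \<le> (\<Prod>k\<in>{1..M} \<times> {j} \<times> (UNIV :: bool set). u)"
      using fac by (intro prod_mono) auto
    finally show ?thesis by (simp add: mult.commute)
  qed
  have "measure P Out \<le> measure P (\<Union>j\<in>{1..N}. E j)"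
    using sub by (rule finite_measure.finite_measure_mono[OF fm]) (use Esets in auto)
  also have "\<dots> \<le> (\<Sum>j\<in>{1..N}. measure P (E j))"
    by (rule measure_UNION_le) (use Esets in auto)
  also have "\<dots> \<le> (\<Sum>j\<in>{1..N}. u ^ (2 * M))"
    using Ej by (rule sum_mono)
  also have "\<dots> = real N * (4 * c / (pi * \<rho>))^M"
  proof -
    have "u^2 = 4 * c / (pi * \<rho>)"
      unfolding u_def using a(2) by (simp add: power_mult_distrib power_divide field_simps)
    then show ?thesis by (simp add: power_mult)
  qed
  finally show ?thesis unfolding single_hop_outage_def Out_def \<rho>_def by simp
qed


theorem proposition2:
  fixes P :: "'w measure" and h :: "nat \<Rightarrow> nat \<Rightarrow> 'w \<Rightarrow> complex"
    and M N :: nat and B T W sigma0 :: real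
  assumes "M \<ge> 1" and "N \<ge> 1"
    and "B > 0" and "T > 0" and "W > 0" and "sigma0 > 0"
    and "iid_CN01_fading P h M N"
  shows "((\<lambda>Pt. - ln (single_hop_outage P h M N B T W sigma0 Pt) / ln Pt)
           \<longlongrightarrow> real M) at_top"
proof -
  note pos = assms(3-6)
  define c where "c = 2 powr (B / (T * W)) - 1"
  define c' where "c' = 2 powr (real N * B / (T * W)) - 1"
  define k1 where "k1 = exp (-1)^2 / pi * c * W * sigma0 / (8 * real M)"
  define k2 where "k2 = 4 * c' * W * sigma0 / pi"
  have "1 < (2::real) powr (B / (T * W))" using pos by (intro gr_one_powr) auto
  then have c: "c > 0" using c_def by simp
  have k1: "k1 > 0" using c pos assms(1) by (simp add: k1_def)
  show ?thesis
  proof (rule squeeze[where Ca="k1^M" and Cb="real N * k2^M"])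
    show "k1^M > 0" using k1 by simp
    show "eventually (\<lambda>x. k1^M / x^M \<le> single_hop_outage P h M N B T W sigma0 x \<and>
        single_hop_outage P h M N B T W sigma0 x \<le> real N * k2^M / x^M) at_top"
      using eventually_ge_at_top[of "max 1 (c * W * sigma0 / (2 * real M))"]
    proof eventually_elim
      case (elim Pt)
      then have Pt: "Pt > 0" and Pt2: "c * W * sigma0 / (2 * real M) \<le> Pt" by auto
      have cle: "c \<le> 2 * real M * avg_snr Pt W sigma0"
        using Pt2 pos assms(1) by (simp add: avg_snr_def field_simps)
      have "exp (-1)^2 / pi * c / (8 * real M * avg_snr Pt W sigma0) = k1 / Pt"
        using pos Pt assms(1) by (simp add: avg_snr_def k1_def field_simps)
      then have "(exp (-1)^2 / pi * c / (8 * real M * avg_snr Pt W sigma0))^M = k1^M / Pt^M"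
        by (simp add: power_divide)
      moreover have "4 * c' / (pi * avg_snr Pt W sigma0) = k2 / Pt"
        using pos Pt by (simp add: avg_snr_def k2_def field_simps)
      then have "real N * (4 * c' / (pi * avg_snr Pt W sigma0))^M = real N * k2^M / Pt^M"
        by (simp add: power_divide)
      ultimately show ?case
        using lower_bound[OF assms Pt c_def cle] upper_bound[OF assms Pt c'_def] by simp
    qed
  qed
qed

end
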